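(* Consider tuples $(A,p,q_I,q_J,\langle S,\pi\rangle,\langle S',\pi'\rangle)$, where: - $A\subset\mathcal{A}$ is a firm; - $p$ is a full-support skill distribution; - $q_I,q_J$ are full-support perceptions with $q_I\succsim_{LR}q_J$; - $\langle S,\pi\rangle,\langle S',\pi'\rangle$ are signal structures with $\langle S',\pi'\rangle\succsim_G\langle S,\pi\rangle$. Consider the following five properties: (i) $A\subset\mathcal{A}_M$; (ii) $\langle S',\pi'\rangle$ is MLR; (iii) $q_I\succsim_{LR}p$; (iv) $p\succsim_{LR}q_J$; (v) $\langle S',\pi'\rangle$ is slightly more informative than $\langle S,\pi\rangle$ for firm $A$ at perceptions $q_I$ and $q_J$. For each $k\in\{\mathrm{(i)},\dots,\mathrm{(v)}\}$ there exists such a tuple (for some finite $\Theta\subset\mathbb{R}$ with $|\Theta|\ge2$) with three features: it violates property $k$; it satisfies the other four properties; and it violates $$W_A(p,q_I,\langle S',\pi'\rangle)-W_A(p,q_J,\langle S',\pi'\rangle)\le W_A(p,q_I,\langle S,\pi\rangle)-W_A(p,q_J,\langle S,\pi\rangle).$$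
   Context: Let $\Theta\subset\mathbb{R}$ be a finite set of skill types with $|\Theta|\ge2$. Tasks are vectors $a\in\mathcal{A}:=\mathbb{R}^\Theta$. A firm is a non-empty finite set $A\subset\mathcal{A}$. It is monotone if $A\subset\mathcal{A}_M:=\{a: a(\theta')>a(\theta)\text{ whenever }\theta'>\theta\}$. A signal structure $\langle S,\pi\rangle$ consists of a non-empty finite set $S$ and a map $\pi:S\times\Theta\to[0,1]$ with $\sum_s\pi(s|\theta)=1$, such that each $s$ has $\pi(s|\theta)>0$ for some $\theta$. Pay: - $p,q\in\Delta(\Theta)$ have full support. - $q_{\langle S,\pi\rangle}(\theta|s):=q(\theta)\pi(s|\theta)/\sum_{\theta'}q(\theta')\pi(s|\theta')$. - $w_A(s,q,\langle S,\pi\rangle):=\max_{a\in A}\sum_\theta q_{\langle S,\pi\rangle}(\theta|s)a(\theta)$. - $W_A(p,q,\langle S,\pi\rangle):=\sum_\theta p(\theta)\sum_s\pi(s|\theta)w_A(s,q,\langle S,\pi\rangle)$. Orders: - $q'\succsim_{LR}q$ means $q(\theta)q'(\theta')\ge q(\theta')q'(\theta)$ whenever $\theta'>\theta$. - $\langle S',\pi'\rangle\succsim_G\langle S,\pi\rangle$ means there exists a garbling kernel $g:S\times S'\to[0,1]$ with $\sum_s g(s|s')=1$ for each $s'$ and $\pi(s|\theta)=\sum_{s'}g(s|s')\pi'(s'|\theta)$ for all $s,\theta$. - $\langle S,\pi\rangle$ is MLR if $S\subset\mathbb{R}$ and $\pi(s|\theta)\pi(s'|\theta')\ge\pi(s|\theta')\pi(s'|\theta)$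 whenever $s'>s$, $\theta'>\theta$. Slightness: $\langle S',\pi'\rangle$ is slightly more informative than $\langle S,\pi\rangle$ for firm $A$ at perception $q$ if there is a garbling kernel $g$ from $\langle S',\pi'\rangle$ to $\langle S,\pi\rangle$ such that, for all $s\in S$, $s'\in S'$ with $g(s|s')>0$, $$\arg\max_{a\in A}\sum_\theta q_{\langle S,\pi\rangle}(\theta|s)a(\theta)\cap\arg\max_{a\in A}\sum_\theta q_{\langle S',\pi'\rangle}(\theta|s')a(\theta)\neq\varnothing.$$ *)

theory Defs
  imports Complex_Main
begin

text \<open>Tasks are functions real => real (only their values on Th matter).
  Signals are reals; a signal structure is a pair (S, sg) with sg s th = sg(s|th).\<close>

definition skill_types :: "real set \<Rightarrow> bool" where
  "skill_types Th \<longleftrightarrow> finite Th \<and> card Th \<ge> 2"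

definition firm :: "(real \<Rightarrow> real) set \<Rightarrow> bool" where
  "firm A \<longleftrightarrow> finite A \<and> A \<noteq> {}"

definition monotone_firm :: "real set \<Rightarrow> (real \<Rightarrow> real) set \<Rightarrow> bool" where
  "monotone_firm Th A \<longleftrightarrow> (\<forall>a\<in>A. \<forall>th\<in>Th. \<forall>th'\<in>Th. th' > th \<longrightarrow> a th' > a th)"

definition full_support :: "real set \<Rightarrow> (real \<Rightarrow> real) \<Rightarrow> bool" where
  "full_support Th p \<longleftrightarrow> (\<forall>th\<in>Th. p th > 0) \<and> (\<Sum>th\<in>Th. p th) = 1"

definition signal_structure :: "real set \<Rightarrow> real set \<Rightarrow> (real \<Rightarrow> real \<Rightarrow> real) \<Rightarrow> bool" where
  "signal_structure Th S sg \<longleftrightarrow> finite S \<and> S \<noteq> {} \<and>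
     (\<forall>s\<in>S. \<forall>th\<in>Th. 0 \<le> sg s th \<and> sg s th \<le> 1) \<and>
     (\<forall>th\<in>Th. (\<Sum>s\<in>S. sg s th) = 1) \<and>
     (\<forall>s\<in>S. \<exists>th\<in>Th. sg s th > 0)"

definition posterior :: "real set \<Rightarrow> (real \<Rightarrow> real) \<Rightarrow> (real \<Rightarrow> real \<Rightarrow> real) \<Rightarrow> real \<Rightarrow> real \<Rightarrow> real" where
  "posterior Th q sg s th = q th * sg s th / (\<Sum>th'\<in>Th. q th' * sg s th')"

definition exp_val :: "real set \<Rightarrow> (real \<Rightarrow> real) \<Rightarrow> (real \<Rightarrow> real \<Rightarrow> real) \<Rightarrow> real \<Rightarrow> (real \<Rightarrow> real) \<Rightarrow> real" where
  "exp_val Th q sg s a = (\<Sum>th\<in>Th. posterior Th q sg s th * a th)"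

definition wage :: "real set \<Rightarrow> (real \<Rightarrow> real) set \<Rightarrow> real \<Rightarrow> (real \<Rightarrow> real) \<Rightarrow> (real \<Rightarrow> real \<Rightarrow> real) \<Rightarrow> real" where
  "wage Th A s q sg = Max (exp_val Th q sg s ` A)"

definition Wage :: "real set \<Rightarrow> (real \<Rightarrow> real) set \<Rightarrow> (real \<Rightarrow> real) \<Rightarrow> (real \<Rightarrow> real)
    \<Rightarrow> real set \<Rightarrow> (real \<Rightarrow> real \<Rightarrow> real) \<Rightarrow> real" where
  "Wage Th A p q S sg = (\<Sum>th\<in>Th. p th * (\<Sum>s\<in>S. sg s th * wage Th A s q sg))"

definition argmax_tasks :: "real set \<Rightarrow> (real \<Rightarrow> real) set \<Rightarrow> (real \<Rightarrow> real) \<Rightarrow> (real \<Rightarrow> real \<Rightarrow> real) \<Rightarrow> real \<Rightarrow> (real \<Rightarrow> real) set" where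
  "argmax_tasks Th A q sg s = {a\<in>A. \<forall>b\<in>A. exp_val Th q sg s b \<le> exp_val Th q sg s a}"

definition lr_geq :: "real set \<Rightarrow> (real \<Rightarrow> real) \<Rightarrow> (real \<Rightarrow> real) \<Rightarrow> bool" where
  "lr_geq Th q' q \<longleftrightarrow> (\<forall>th\<in>Th. \<forall>th'\<in>Th. th' > th \<longrightarrow> q th * q' th' \<ge> q th' * q' th)"

text \<open>g s s' = g(s|s') is a garbling kernel from (S',sg') to (S,sg).\<close>
definition garbling_kernel :: "real set \<Rightarrow> real set \<Rightarrow> (real \<Rightarrow> real \<Rightarrow> real) \<Rightarrow> real set
    \<Rightarrow> (real \<Rightarrow> real \<Rightarrow> real) \<Rightarrow> (real \<Rightarrow> real \<Rightarrow> real) \<Rightarrow> bool" where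
  "garbling_kernel Th S' sg' S sg g \<longleftrightarrow>
     (\<forall>s\<in>S. \<forall>s'\<in>S'. 0 \<le> g s s' \<and> g s s' \<le> 1) \<and>
     (\<forall>s'\<in>S'. (\<Sum>s\<in>S. g s s') = 1) \<and>
     (\<forall>s\<in>S. \<forall>th\<in>Th. sg s th = (\<Sum>s'\<in>S'. g s s' * sg' s' th))"

definition blackwell_geq :: "real set \<Rightarrow> real set \<Rightarrow> (real \<Rightarrow> real \<Rightarrow> real) \<Rightarrow> real set
    \<Rightarrow> (real \<Rightarrow> real \<Rightarrow> real) \<Rightarrow> bool" where
  "blackwell_geq Th S' sg' S sg \<longleftrightarrow> (\<exists>g. garbling_kernel Th S' sg' S sg g)"

definition MLR :: "real set \<Rightarrow> real set \<Rightarrow> (real \<Rightarrow> real \<Rightarrow> real) \<Rightarrow> bool" where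
  "MLR Th S sg \<longleftrightarrow> (\<forall>s\<in>S. \<forall>s'\<in>S. \<forall>th\<in>Th. \<forall>th'\<in>Th. s' > s \<longrightarrow> th' > th \<longrightarrow>
      sg s th * sg s' th' \<ge> sg s th' * sg s' th)"

definition slightly_more_informative :: "real set \<Rightarrow> (real \<Rightarrow> real) set \<Rightarrow> (real \<Rightarrow> real)
    \<Rightarrow> real set \<Rightarrow> (real \<Rightarrow> real \<Rightarrow> real) \<Rightarrow> real set \<Rightarrow> (real \<Rightarrow> real \<Rightarrow> real) \<Rightarrow> bool" where
  "slightly_more_informative Th A q S' sg' S sg \<longleftrightarrow>
     (\<exists>g. garbling_kernel Th S' sg' S sg g \<and>
        (\<forall>s\<in>S. \<forall>s'\<in>S'. g s s' > 0 \<longrightarrow>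
           argmax_tasks Th A q sg s \<inter> argmax_tasks Th A q sg' s' \<noteq> {}))"

text \<open>The five properties (i)--(v), indexed 1..5.\<close>
definition prop_k :: "nat \<Rightarrow> real set \<Rightarrow> (real \<Rightarrow> real) set \<Rightarrow> (real \<Rightarrow> real) \<Rightarrow> (real \<Rightarrow> real)
    \<Rightarrow> (real \<Rightarrow> real) \<Rightarrow> real set \<Rightarrow> (real \<Rightarrow> real \<Rightarrow> real) \<Rightarrow> real set \<Rightarrow> (real \<Rightarrow> real \<Rightarrow> real) \<Rightarrow> bool" where
  "prop_k k Th A p qI qJ S sg S' sg' =
     (if k = 1 then monotone_firm Th A
      else if k = 2 then MLR Th S' sg'
      else if k = 3 then lr_geq Th qI p
      else if k = 4 then lr_geq Th p qJ
      else slightly_more_informative Th A qI S' sg' S sg \<and>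
           slightly_more_informative Th A qJ S' sg' S sg)"

definition admissible_tuple :: "real set \<Rightarrow> (real \<Rightarrow> real) set \<Rightarrow> (real \<Rightarrow> real) \<Rightarrow> (real \<Rightarrow> real)
    \<Rightarrow> (real \<Rightarrow> real) \<Rightarrow> real set \<Rightarrow> (real \<Rightarrow> real \<Rightarrow> real) \<Rightarrow> real set \<Rightarrow> (real \<Rightarrow> real \<Rightarrow> real) \<Rightarrow> bool" where
  "admissible_tuple Th A p qI qJ S sg S' sg' \<longleftrightarrow>
     skill_types Th \<and> firm A \<and> full_support Th p \<and> full_support Th qI \<and> full_support Th qJ \<and>
     lr_geq Th qI qJ \<and> signal_structure Th S sg \<and> signal_structure Th S' sg' \<and>
     blackwell_geq Th S' sg' S sg"

end

theory Submission
  imports Defs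
begin
definition v2 :: "real \<Rightarrow> real \<Rightarrow> real \<Rightarrow> real" where "v2 x y = (\<lambda>th. if th = 0 then x else y)"
definition m2 :: "(real \<Rightarrow> real) \<Rightarrow> (real \<Rightarrow> real) \<Rightarrow> real \<Rightarrow> real \<Rightarrow> real" where "m2 f g = (\<lambda>s. if s = 0 then f else g)"

lemma gk_triv: assumes "signal_structure Th S' sg'"
  shows "garbling_kernel Th S' sg' {0} (\<lambda>s th. 1) (\<lambda>s s'. 1)"
  using assms unfolding garbling_kernel_def signal_structure_def by (simp add: sum_distrib_left)

lemma bw_triv: assumes "signal_structure Th S' sg'"
  shows "blackwell_geq Th S' sg' {0} (\<lambda>s th. 1)"
  using gk_triv[OF assms] unfolding blackwell_geq_def by blast

lemma smi_triv: assumes "signal_structure Th S' sg'"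
  "\<forall>s'\<in>S'. \<exists>a\<in>A. a \<in> argmax_tasks Th A q (\<lambda>s th. 1) 0 \<and> a \<in> argmax_tasks Th A q sg' s'"
  shows "slightly_more_informative Th A q S' sg' {0} (\<lambda>s th. 1)"
  unfolding slightly_more_informative_def
  apply (rule exI[of _ "\<lambda>s s'. 1"])
  using gk_triv[OF assms(1)] assms(2) by blast

lemma smi_D: assumes "slightly_more_informative Th A q S' sg' {0} sg" "s' \<in> S'"
  shows "\<exists>a\<in>A. a \<in> argmax_tasks Th A q sg 0 \<and> a \<in> argmax_tasks Th A q sg' s'"
proof -
  obtain g where g: "garbling_kernel Th S' sg' {0} sg g"
    "\<forall>s\<in>{0}. \<forall>s'\<in>S'. g s s' > 0 \<longrightarrow> argmax_tasks Th A q sg s \<inter> argmax_tasks Th A q sg' s' \<noteq> {}"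
    using assms(1) unfolding slightly_more_informative_def by blast
  have "g 0 s' = 1" using g(1) assms(2) unfolding garbling_kernel_def by auto
  then have "argmax_tasks Th A q sg 0 \<inter> argmax_tasks Th A q sg' s' \<noteq> {}" using g(2) assms(2) by auto
  then show ?thesis unfolding argmax_tasks_def by blast
qed

lemma ss0: "signal_structure {0,1} {0} (\<lambda>s th. 1)"
  unfolding signal_structure_def by auto

lemmas defs = admissible_tuple_def skill_types_def firm_def full_support_def lr_geq_def
     signal_structure_def prop_k_def monotone_firm_def MLR_def
     argmax_tasks_def Wage_def wage_def exp_val_def posterior_def v2_def m2_def

lemma ex1:
  defines "A \<equiv> {v2 (-1) (-2), v2 1 (-1)}" and "p \<equiv> v2 (1/2) (1/2)" and "qI \<equiv> v2 (1/4) (3/4)"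
    and "qJ \<equiv> v2 (3/4) (1/4)" and "SG \<equiv> m2 (v2 (2/3) (1/3)) (v2 (1/3) (2/3))"
  shows "admissible_tuple {0,1} A p qI qJ {0} (\<lambda>s th. 1) {0,1} SG \<and>
  \<not> prop_k 1 {0,1} A p qI qJ {0} (\<lambda>s th. 1) {0,1} SG \<and>
  (\<forall>j\<in>{2,3,4,5}. prop_k j {0,1} A p qI qJ {0} (\<lambda>s th. 1) {0,1} SG) \<and>
  \<not> (Wage {0,1} A p qI {0,1} SG - Wage {0,1} A p qJ {0,1} SG
   \<le> Wage {0,1} A p qI {0} (\<lambda>s th. 1) - Wage {0,1} A p qJ {0} (\<lambda>s th. 1))"
proof -
  have ss: "signal_structure {0,1} {0,1} SG" by (simp add: defs SG_def)
  have s1: "slightly_more_informative {0,1} A qI {0,1} SG {0} (\<lambda>s th. 1)"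
    by (rule smi_triv[OF ss]) (simp add: defs A_def qI_def SG_def)
  have s2: "slightly_more_informative {0,1} A qJ {0,1} SG {0} (\<lambda>s th. 1)"
    by (rule smi_triv[OF ss]) (simp add: defs A_def qJ_def SG_def)
  show ?thesis using ss s1 s2 ss0 bw_triv[OF ss]
    by (simp add: defs A_def p_def qI_def qJ_def SG_def)
qed

lemma ex2:
  defines "A \<equiv> {v2 (-1) 0, v2 (-2) 1}" and "p \<equiv> v2 (1/2) (1/2)" and "qI \<equiv> v2 (1/2) (1/2)"
    and "qJ \<equiv> v2 (4/5) (1/5)" and "SG \<equiv> m2 (v2 (3/5) (3/4)) (v2 (2/5) (1/4))"
  shows "admissible_tuple {0,1} A p qI qJ {0} (\<lambda>s th. 1) {0,1} SG \<and>
  \<not> prop_k 2 {0,1} A p qI qJ {0} (\<lambda>s th. 1) {0,1} SG \<and>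
  (\<forall>j\<in>{1,3,4,5}. prop_k j {0,1} A p qI qJ {0} (\<lambda>s th. 1) {0,1} SG) \<and>
  \<not> (Wage {0,1} A p qI {0,1} SG - Wage {0,1} A p qJ {0,1} SG
   \<le> Wage {0,1} A p qI {0} (\<lambda>s th. 1) - Wage {0,1} A p qJ {0} (\<lambda>s th. 1))"
proof -
  have ss: "signal_structure {0,1} {0,1} SG" by (simp add: defs SG_def)
  have s1: "slightly_more_informative {0,1} A qI {0,1} SG {0} (\<lambda>s th. 1)"
    by (rule smi_triv[OF ss]) (simp add: defs A_def qI_def SG_def)
  have s2: "slightly_more_informative {0,1} A qJ {0,1} SG {0} (\<lambda>s th. 1)"
    by (rule smi_triv[OF ss]) (simp add: defs A_def qJ_def SG_def)
  show ?thesis using ss s1 s2 ss0 bw_triv[OF ss]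
    by (simp add: defs A_def p_def qI_def qJ_def SG_def)
qed

lemma ex3:
  defines "A \<equiv> {v2 (-2) 2, v2 0 1}" and "p \<equiv> v2 (1/2) (1/2)" and "qI \<equiv> v2 (3/4) (1/4)"
    and "qJ \<equiv> v2 (4/5) (1/5)" and "SG \<equiv> m2 (v2 (1/3) 0) (v2 (2/3) 1)"
  shows "admissible_tuple {0,1} A p qI qJ {0} (\<lambda>s th. 1) {0,1} SG \<and>
  \<not> prop_k 3 {0,1} A p qI qJ {0} (\<lambda>s th. 1) {0,1} SG \<and>
  (\<forall>j\<in>{1,2,4,5}. prop_k j {0,1} A p qI qJ {0} (\<lambda>s th. 1) {0,1} SG) \<and>
  \<not> (Wage {0,1} A p qI {0,1} SG - Wage {0,1} A p qJ {0,1} SG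
   \<le> Wage {0,1} A p qI {0} (\<lambda>s th. 1) - Wage {0,1} A p qJ {0} (\<lambda>s th. 1))"
proof -
  have ss: "signal_structure {0,1} {0,1} SG" by (simp add: defs SG_def)
  have s1: "slightly_more_informative {0,1} A qI {0,1} SG {0} (\<lambda>s th. 1)"
    by (rule smi_triv[OF ss]) (simp add: defs A_def qI_def SG_def)
  have s2: "slightly_more_informative {0,1} A qJ {0,1} SG {0} (\<lambda>s th. 1)"
    by (rule smi_triv[OF ss]) (simp add: defs A_def qJ_def SG_def)
  show ?thesis using ss s1 s2 ss0 bw_triv[OF ss]
    by (simp add: defs A_def p_def qI_def qJ_def SG_def)
qed

lemma ex4:
  defines "A \<equiv> {v2 (-2) (-1)}" and "p \<equiv> v2 (3/4) (1/4)" and "qI \<equiv> v2 (1/5) (4/5)"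
    and "qJ \<equiv> v2 (1/4) (3/4)" and "SG \<equiv> m2 (v2 1 (3/4)) (v2 0 (1/4))"
  shows "admissible_tuple {0,1} A p qI qJ {0} (\<lambda>s th. 1) {0,1} SG \<and>
  \<not> prop_k 4 {0,1} A p qI qJ {0} (\<lambda>s th. 1) {0,1} SG \<and>
  (\<forall>j\<in>{1,2,3,5}. prop_k j {0,1} A p qI qJ {0} (\<lambda>s th. 1) {0,1} SG) \<and>
  \<not> (Wage {0,1} A p qI {0,1} SG - Wage {0,1} A p qJ {0,1} SG
   \<le> Wage {0,1} A p qI {0} (\<lambda>s th. 1) - Wage {0,1} A p qJ {0} (\<lambda>s th. 1))"
proof -
  have ss: "signal_structure {0,1} {0,1} SG" by (simp add: defs SG_def)
  have s1: "slightly_more_informative {0,1} A qI {0,1} SG {0} (\<lambda>s th. 1)"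
    by (rule smi_triv[OF ss]) (simp add: defs A_def qI_def SG_def)
  have s2: "slightly_more_informative {0,1} A qJ {0,1} SG {0} (\<lambda>s th. 1)"
    by (rule smi_triv[OF ss]) (simp add: defs A_def qJ_def SG_def)
  show ?thesis using ss s1 s2 ss0 bw_triv[OF ss]
    by (simp add: defs A_def p_def qI_def qJ_def SG_def)
qed

lemma ex5:
  defines "A \<equiv> {v2 0 1, v2 (-2) 2}" and "p \<equiv> v2 (1/2) (1/2)" and "qI \<equiv> v2 (1/4) (3/4)"
    and "qJ \<equiv> v2 (1/2) (1/2)" and "SG \<equiv> m2 (v2 (1/2) 0) (v2 (1/2) 1)"
  shows "admissible_tuple {0,1} A p qI qJ {0} (\<lambda>s th. 1) {0,1} SG \<and>
  \<not> prop_k 5 {0,1} A p qI qJ {0} (\<lambda>s th. 1) {0,1} SG \<and>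
  (\<forall>j\<in>{1,2,3,4}. prop_k j {0,1} A p qI qJ {0} (\<lambda>s th. 1) {0,1} SG) \<and>
  \<not> (Wage {0,1} A p qI {0,1} SG - Wage {0,1} A p qJ {0,1} SG
   \<le> Wage {0,1} A p qI {0} (\<lambda>s th. 1) - Wage {0,1} A p qJ {0} (\<lambda>s th. 1))"
proof -
  have ss: "signal_structure {0,1} {0,1} SG" by (simp add: defs SG_def)
  have s1: "\<not> slightly_more_informative {0,1} A qI {0,1} SG {0} (\<lambda>s th. 1)"
  proof
    assume "slightly_more_informative {0,1} A qI {0,1} SG {0} (\<lambda>s th. 1)"
    from smi_D[OF this, of 0] show False by (simp add: defs A_def qI_def SG_def)
  qed
  show ?thesis using ss s1 ss0 bw_triv[OF ss]
    by (simp add: defs A_def p_def qI_def qJ_def SG_def)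
qed

lemma setk: "k \<in> {1..5} \<Longrightarrow> {1..5} - {k} = {1,2,3,4,5} - {k::nat}" by auto

theorem proposition2:
  fixes k :: nat
  assumes "k \<in> {1..5}"
  shows "\<exists>Th A p qI qJ S sg S' sg'.
           admissible_tuple Th A p qI qJ S sg S' sg' \<and>
           \<not> prop_k k Th A p qI qJ S sg S' sg' \<and>
           (\<forall>j\<in>{1..5} - {k}. prop_k j Th A p qI qJ S sg S' sg') \<and>
           \<not> (Wage Th A p qI S' sg' - Wage Th A p qJ S' sg'
                \<le> Wage Th A p qI S sg - Wage Th A p qJ S sg)"
proof -
  have k: "k = 1 \<or> k = 2 \<or> k = 3 \<or> k = 4 \<or> k = 5" using assms by auto
  have e1: "{1..5} - {1} = {2,3,4,5::nat}" by auto
  have e2: "{1..5} - {2} = {1,3,4,5::nat}" by auto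
  have e3: "{1..5} - {3} = {1,2,4,5::nat}" by auto
  have e4: "{1..5} - {4} = {1,2,3,5::nat}" by auto
  have e5: "{1..5} - {5} = {1,2,3,4::nat}" by auto
  show ?thesis using k
  proof (elim disjE)
    assume k1: "k = 1" show ?thesis unfolding k1 e1 by (rule exI)+ (rule ex1)
  next
    assume k2: "k = 2" show ?thesis unfolding k2 e2 by (rule exI)+ (rule ex2)
  next
    assume k3: "k = 3" show ?thesis unfolding k3 e3 by (rule exI)+ (rule ex3)
  next
    assume k4: "k = 4" show ?thesis unfolding k4 e4 by (rule exI)+ (rule ex4)
  next
    assume k5: "k = 5" show ?thesis unfolding k5 e5 by (rule exI)+ (rule ex5)
  qed
qed

end
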